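(* For every composite positive integer $n$ the following are equivalent: (i) $n$ is a Gaussian Carmichael number; (ii) $\Lambda(n)$ divides $\mathcal{F}(n)$; (iii) for every prime divisor $p$ of $n$, $\mathcal{F}(p)$ divides $\mathcal{F}(n)$, and one of the following holds: (a) $n$ is odd and square-free; (b) $4\mid n$ and $n/4\in\{2,3,5\}$ or $n/4$ is not a prime.
   Context: For a positive integer $n$, $\mathcal{G}_n=\{a+bi\in\mathbb{Z}[i]/n\mathbb{Z}[i] : a^2+b^2\equiv 1\pmod n\}$ (a multiplicative group), and $\Lambda(n)$ is the exponent of $\mathcal{G}_n$. The function $\mathcal{F}$ is defined by $\mathcal{F}(n)=n-1$ if $n\equiv 1\pmod 4$, $\mathcal{F}(n)=n+1$ if $n\equiv 3 \pmod 4$, $\mathcal{F}(n)=n$ otherwise. A composite integer $n$ is a Gaussian Fermat pseudoprime to base $z\in\mathbb{Z}[i]$ if $\gcd(n,z\overline{z})=1$ and $(z/\overline{z})^{\mathcal{F}(n)}\equiv 1\pmod n$ in $\mathbb{Z}[i]/n\mathbb{Z}[i]$. A composite $n$ is a Gaussian Carmichael number if it is a Gaussian Fermat pseudoprime to base $z$ for every $z\in\mathbb{Z}[i]$ with $\gcd(n,z\overline{z})=1$. *)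

theory Defs
  imports "HOL-Number_Theory.Number_Theory" "HOL-Computational_Algebra.Squarefree"
begin

text \<open>Gaussian integers a + b i are represented as pairs (a, b) of integers.\<close>

type_synonym gint = "int \<times> int"

definition gmult :: "gint \<Rightarrow> gint \<Rightarrow> gint" where
  "gmult z w = (fst z * fst w - snd z * snd w, fst z * snd w + snd z * fst w)"

definition gconj :: "gint \<Rightarrow> gint" where
  "gconj z = (fst z, - snd z)"

definition gnorm :: "gint \<Rightarrow> int" where
  "gnorm z = fst z ^ 2 + snd z ^ 2"

fun gpow :: "gint \<Rightarrow> nat \<Rightarrow> gint" where
  "gpow z 0 = (1, 0)"
| "gpow z (Suc k) = gmult z (gpow z k)"

definition gcong :: "nat \<Rightarrow> gint \<Rightarrow> gint \<Rightarrow> bool" where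
  "gcong n z w \<longleftrightarrow> [fst z = fst w] (mod int n) \<and> [snd z = snd w] (mod int n)"

text \<open>A chosen inverse of u in Z[i]/nZ[i] (meaningful when u is a unit mod n).\<close>
definition ginv :: "nat \<Rightarrow> gint \<Rightarrow> gint" where
  "ginv n u = (SOME v. gcong n (gmult v u) (1, 0))"

definition Gn :: "nat \<Rightarrow> gint set" where
  "Gn n = {z. fst z \<in> {0..<int n} \<and> snd z \<in> {0..<int n} \<and> [gnorm z = 1] (mod int n)}"

definition Lambda :: "nat \<Rightarrow> nat" where
  "Lambda n = (LEAST k. 0 < k \<and> (\<forall>x \<in> Gn n. gcong n (gpow x k) (1, 0)))"

definition FF :: "nat \<Rightarrow> nat" where
  "FF n = (if n mod 4 = 1 then n - 1 else if n mod 4 = 3 then n + 1 else n)"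

definition composite :: "nat \<Rightarrow> bool" where
  "composite n \<longleftrightarrow> 1 < n \<and> \<not> prime n"

definition gauss_fermat_psp :: "nat \<Rightarrow> gint \<Rightarrow> bool" where
  "gauss_fermat_psp n z \<longleftrightarrow> composite n \<and> coprime (int n) (gnorm z) \<and>
     gcong n (gpow (gmult z (ginv n (gconj z))) (FF n)) (1, 0)"

definition gauss_carmichael :: "nat \<Rightarrow> bool" where
  "gauss_carmichael n \<longleftrightarrow> composite n \<and>
     (\<forall>z. coprime (int n) (gnorm z) \<longrightarrow> gauss_fermat_psp n z)"

end

theory Submission
  imports Defs
begin


lemma gmult_comm: "gmult z w = gmult w z"
  by (simp add: gmult_def algebra_simps)
lemma gmult_assoc: "gmult (gmult z w) u = gmult z (gmult w u)"
  by (simp add: gmult_def algebra_simps)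
lemma gmult_one[simp]: "gmult (1,0) z = z" "gmult z (1,0) = z"
  by (simp_all add: gmult_def)
lemma gpow_add: "gpow z (a + b) = gmult (gpow z a) (gpow z b)"
  by (induction a) (simp_all add: gmult_assoc)
lemma gpow_mult: "gpow z (a * b) = gpow (gpow z a) b"
  by (induction b) (simp_all add: gpow_add gmult_comm)
lemma gpow_gmult: "gpow (gmult z w) k = gmult (gpow z k) (gpow w k)"
  by (induction k) (simp_all add: gmult_assoc gmult_comm gmult_def algebra_simps)
lemma gconj_mult: "gconj (gmult z w) = gmult (gconj z) (gconj w)"
  by (simp add: gmult_def gconj_def)
lemma gconj_pow: "gconj (gpow z k) = gpow (gconj z) k"
  by (induction k) (simp_all add: gconj_mult, simp add: gconj_def)
lemma gnorm_mult: "gnorm (gmult z w) = gnorm z * gnorm w"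
  by (simp add: gmult_def gnorm_def power2_eq_square algebra_simps)
lemma gnorm_conj[simp]: "gnorm (gconj z) = gnorm z"
  by (simp add: gconj_def gnorm_def)
lemma gmult_conj: "gmult z (gconj z) = (gnorm z, 0)"
  by (simp add: gmult_def gconj_def gnorm_def power2_eq_square algebra_simps)
lemma gpow_real: "gpow (a, 0) k = (a ^ k, 0)"
  by (induction k) (simp_all add: gmult_def)

lemma gcong_refl[simp]: "gcong n z z" by (simp add: gcong_def)
lemma gcong_sym: "gcong n z w \<Longrightarrow> gcong n w z" by (simp add: gcong_def cong_sym)
lemma gcong_trans: "gcong n z w \<Longrightarrow> gcong n w u \<Longrightarrow> gcong n z u"
  unfolding gcong_def using cong_trans by blast
lemma gcong_mult: "gcong n z w \<Longrightarrow> gcong n z' w' \<Longrightarrow> gcong n (gmult z z') (gmult w w')"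
  unfolding gcong_def gmult_def by (auto intro: cong_add cong_diff cong_mult)
lemma gcong_pow: "gcong n z w \<Longrightarrow> gcong n (gpow z k) (gpow w k)"
  by (induction k) (simp_all add: gcong_mult)
lemma gcong_conj: "gcong n z w \<Longrightarrow> gcong n (gconj z) (gconj w)"
  unfolding gcong_def gconj_def by (auto intro: cong_minus_minus_iff[THEN iffD2])
lemma gcong_norm: "gcong n z w \<Longrightarrow> [gnorm z = gnorm w] (mod int n)"
  unfolding gcong_def gnorm_def by (auto intro: cong_add cong_pow)
lemma gcong_dvd: "gcong n z w \<Longrightarrow> m dvd n \<Longrightarrow> gcong m z w"
  unfolding gcong_def using cong_dvd_modulus int_dvd_int_iff by blast



definition cx :: "gint \<Rightarrow> complex" where
  "cx z = Complex (of_int (fst z)) (of_int (snd z))"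

lemma cx_mult: "cx (gmult z w) = cx z * cx w"
  by (simp add: cx_def gmult_def complex_eq_iff)
lemma cx_pow: "cx (gpow z k) = cx z ^ k"
  by (induction k) (simp_all add: cx_mult, simp add: cx_def complex_eq_iff)
lemma cx_add: "cx (a + c, b + d) = cx (a, b) + cx (c, d)"
  by (simp add: cx_def complex_eq_iff)
lemma cx_eq: "cx (a, b) = of_int a + \<i> * of_int b"
  by (simp add: cx_def complex_eq_iff)

lemma gcong_cx: "cx z - cx w = of_nat n * cx u \<Longrightarrow> gcong n z w"
proof -
  assume h: "cx z - cx w = of_nat n * cx u"
  have "Re (cx z - cx w) = Re (of_nat n * cx u)" "Im (cx z - cx w) = Im (of_nat n * cx u)"
    using h by simp_all
  hence "of_int (fst z - fst w) = (of_int (int n * fst u) :: real)"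
        "of_int (snd z - snd w) = (of_int (int n * snd u) :: real)"
    by (simp_all add: cx_def)
  hence "fst z - fst w = int n * fst u" "snd z - snd w = int n * snd u"
    by (simp_all only: of_int_eq_iff)
  thus ?thesis unfolding gcong_def by (simp add: cong_iff_dvd_diff)
qed

definition PS :: "nat \<Rightarrow> complex set" where "PS n = range (\<lambda>u. of_nat n * cx u)"

lemma PS_0: "0 \<in> PS n"
  unfolding PS_def by (rule image_eqI[of _ _ "(0,0)"]) (auto simp: cx_def complex_eq_iff)
lemma PS_add: "x \<in> PS n \<Longrightarrow> y \<in> PS n \<Longrightarrow> x + y \<in> PS n"
  unfolding PS_def
proof clarify
  fix u v
  have "of_nat n * cx u + of_nat n * cx v = of_nat n * cx (fst u + fst v, snd u + snd v)"
    by (simp add: cx_def complex_eq_iff algebra_simps)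
  thus "of_nat n * cx u + of_nat n * cx v \<in> range (\<lambda>u. of_nat n * cx u)" by blast
qed
lemma PS_sum: "finite A \<Longrightarrow> (\<And>k. k \<in> A \<Longrightarrow> f k \<in> PS n) \<Longrightarrow> sum f A \<in> PS n"
  by (induction A rule: finite_induct) (auto intro: PS_0 PS_add)

lemma PS_mult_cx: "x \<in> PS n \<Longrightarrow> x * cx w \<in> PS n"
  unfolding PS_def
proof clarify
  fix u
  have "of_nat n * cx u * cx w = of_nat n * cx (gmult u w)" by (simp add: cx_mult)
  thus "of_nat n * cx u * cx w \<in> range (\<lambda>u. of_nat n * cx u)" by blast
qed

lemma fermat_int:
  assumes p: "prime p"
  shows "[a ^ p = a] (mod int p)"
proof -
  define m where "m = nat (a mod int p)"
  have p0: "p > 0" using p prime_gt_0_nat by blast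
  have am: "[a = int m] (mod int p)" unfolding m_def using p0
    by (simp add: cong_def)
  have "[m ^ p = m] (mod p)"
  proof (cases "p dvd m")
    case True
    hence "[m = 0] (mod p)" by (simp add: cong_0_iff)
    moreover hence "[m ^ p = 0 ^ p] (mod p)" using cong_pow by blast
    ultimately show ?thesis using p0 by (metis cong_sym cong_trans power_0_left not_gr0)
  next
    case False
    hence "[m ^ (p - 1) = 1] (mod p)" using fermat_theorem p by blast
    hence "[m ^ (p - 1) * m = 1 * m] (mod p)" using cong_scalar_right by blast
    moreover have "m ^ (p - 1) * m = m ^ p" using p0
      by (metis Suc_diff_1 power_Suc2)
    ultimately show ?thesis by simp
  qed
  hence "[int m ^ p = int m] (mod int p)"
    by (metis cong_int_iff of_nat_power)
  moreover have "[a ^ p = int m ^ p] (mod int p)" using am cong_pow by blast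
  ultimately show ?thesis using am cong_sym cong_trans by blast
qed

lemma frob_cx:
  assumes p: "prime p"
  shows "cx (gpow (a, b) p) - (of_int a ^ p + (\<i> * of_int b) ^ p) \<in> PS p"
proof -
  define A :: complex where "A = of_int a"
  define B :: complex where "B = \<i> * of_int b"
  have p1: "p \<ge> 1" using p prime_ge_1_nat by blast
  have "cx (gpow (a, b) p) = (A + B) ^ p" by (simp add: cx_pow cx_eq A_def B_def)
  also have "\<dots> = (\<Sum>k\<le>p. of_nat (p choose k) * A ^ k * B ^ (p - k))"
    by (simp add: binomial_ring)
  also have "{..p} = insert p (insert 0 {1..<p})" using p1 by auto
  also have "(\<Sum>k\<in>insert p (insert 0 {1..<p}). of_nat (p choose k) * A ^ k * B ^ (p - k))
      = A ^ p + B ^ p + (\<Sum>k\<in>{1..<p}. of_nat (p choose k) * A ^ k * B ^ (p - k))"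
    using p1 by (simp add: add.assoc)
  finally have eq: "cx (gpow (a, b) p) - (A ^ p + B ^ p) = (\<Sum>k\<in>{1..<p}. of_nat (p choose k) * A ^ k * B ^ (p - k))"
    by simp
  have "(\<Sum>k\<in>{1..<p}. of_nat (p choose k) * A ^ k * B ^ (p - k)) \<in> PS p"
  proof (rule PS_sum)
    fix k assume k: "k \<in> {1..<p}"
    hence "p dvd (p choose k)" using p by (intro dvd_choose_prime) auto
    then obtain c where c: "p choose k = p * c" by blast
    have "of_nat (p choose k) * A ^ k * B ^ (p - k) = (of_nat p * cx (int c, 0)) * cx (gpow (a, 0) k) * cx (gpow (0, b) (p - k))"
      by (simp add: c cx_pow cx_eq A_def B_def)
    moreover have "of_nat p * cx (int c, 0) \<in> PS p" unfolding PS_def by blast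
    ultimately show "of_nat (p choose k) * A ^ k * B ^ (p - k) \<in> PS p"
      by (simp add: PS_mult_cx)
  qed simp
  with eq show ?thesis by (simp add: A_def B_def)
qed



lemma i_pow_odd:
  assumes "odd p"
  shows "\<i> ^ p = (if p mod 4 = 1 then \<i> else - \<i>)"
proof -
  have "p = 4 * (p div 4) + p mod 4" by simp
  moreover have "p mod 4 = 1 \<or> p mod 4 = 3" using assms by presburger
  moreover have "\<i> ^ (4 * q) = 1" for q :: nat
  proof -
    have "\<i> ^ (4 * q) = \<i> ^ ((2 * q) * 2)" by (simp add: mult.commute mult.left_commute)
    also have "\<dots> = 1" by (simp only: i_even_power) simp
    finally show ?thesis .
  qed
  have q1: "\<And>q. \<i> ^ (4 * q) = 1" by fact
  have m4: "p mod 4 = 1 \<or> p mod 4 = 3" using assms by presburger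
  have d4: "p = 4 * (p div 4) + p mod 4" by simp
  have "\<i> ^ p = \<i> ^ (4 * (p div 4)) * \<i> ^ (p mod 4)" by (metis d4 power_add)
  hence ip: "\<i> ^ p = \<i> ^ (p mod 4)" using q1 by simp
  have "\<i> ^ 3 = - \<i>" by (simp add: power3_eq_cube)
  thus ?thesis using m4 ip by auto
qed

lemma frob:
  assumes p: "prime p" "odd p"
  shows "gcong p (gpow (a, b) p) (a, if p mod 4 = 1 then b else - b)"
proof -
  obtain u where u: "cx (gpow (a, b) p) - (of_int a ^ p + (\<i> * of_int b) ^ p) = of_nat p * cx u"
    using frob_cx[OF p(1), of a b] unfolding PS_def by auto
  have "of_int a ^ p + (\<i> * of_int b) ^ p = cx (a ^ p, if p mod 4 = 1 then b ^ p else - (b ^ p))"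
    using i_pow_odd[OF p(2)] by (simp add: cx_eq power_mult_distrib)
  with u have "gcong p (gpow (a, b) p) (a ^ p, if p mod 4 = 1 then b ^ p else - (b ^ p))"
    by (intro gcong_cx[of _ _ _ u]) simp
  moreover have "gcong p (a ^ p, if p mod 4 = 1 then b ^ p else - (b ^ p)) (a, if p mod 4 = 1 then b else - b)"
    unfolding gcong_def using fermat_int[OF p(1), of a] fermat_int[OF p(1), of b]
    by (auto intro: cong_minus_minus_iff[THEN iffD2])
  ultimately show ?thesis using gcong_trans by blast
qed

lemma odd_prime_mod4: "prime (p::nat) \<Longrightarrow> odd p \<Longrightarrow> p mod 4 = 1 \<or> p mod 4 = 3"
  by presburger

lemma FF_odd_prime: "odd p \<Longrightarrow> FF p = (if p mod 4 = 1 then p - 1 else p + 1)"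
  unfolding FF_def by presburger

lemma Gp_exp:
  assumes p: "prime p" "odd p" and N: "[gnorm x = 1] (mod int p)"
  shows "gcong p (gpow x (FF p)) (1, 0)"
proof -
  obtain a b where x: "x = (a, b)" by fastforce
  have Nc: "gcong p (gnorm x, 0) (1, 0)" using N by (simp add: gcong_def)
  have fr: "gcong p (gpow x p) (a, if p mod 4 = 1 then b else - b)" using frob[OF p] x by simp
  have p1: "p \<ge> 1" using p prime_ge_1_nat by blast
  show ?thesis
  proof (cases "p mod 4 = 1")
    case True
    hence F: "FF p = p - 1" using FF_odd_prime p by simp
    have xp: "gcong p (gpow x p) x" using fr True x by simp
    have "gpow x p = gpow x (Suc (p - 1))" using p1 by simp
    also have "\<dots> = gmult (gpow x (p - 1)) x" by (simp add: gmult_comm)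
    finally have "gcong p (gmult (gpow x (p - 1)) x) x" using xp by simp
    hence "gcong p (gmult (gmult (gpow x (p - 1)) x) (gconj x)) (gmult x (gconj x))"
      using gcong_mult gcong_refl by blast
    hence "gcong p (gmult (gpow x (p - 1)) (gnorm x, 0)) (gnorm x, 0)"
      by (simp add: gmult_assoc gmult_conj)
    moreover have "gcong p (gmult (gpow x (p - 1)) (1, 0)) (gmult (gpow x (p - 1)) (gnorm x, 0))"
      using gcong_mult[OF gcong_refl gcong_sym[OF Nc]] .
    ultimately have "gcong p (gmult (gpow x (p - 1)) (1, 0)) (gnorm x, 0)"
      using gcong_trans by blast
    hence "gcong p (gmult (gpow x (p - 1)) (1, 0)) (1, 0)"
      using Nc gcong_trans by blast
    thus ?thesis using F by simp
  next
    case False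
    hence F: "FF p = p + 1" using FF_odd_prime p by simp
    have xp: "gcong p (gpow x p) (gconj x)" using fr False x by (simp add: gconj_def)
    have "gpow x (p + 1) = gmult x (gpow x p)" by simp
    hence "gcong p (gpow x (p + 1)) (gmult x (gconj x))" using gcong_mult[OF gcong_refl xp] by simp
    hence "gcong p (gpow x (p + 1)) (gnorm x, 0)" by (simp add: gmult_conj)
    thus ?thesis using F Nc gcong_trans by simp
  qed
qed



lemma lift_step:
  assumes y: "gcong d y (1, 0)" and qd: "q dvd d"
  shows "gcong (q * d) (gpow y q) (1, 0)"
proof -
  obtain a b where yab: "y = (a, b)" by fastforce
  have "[a = 1] (mod int d)" "[b = 0] (mod int d)" using y yab by (simp_all add: gcong_def)
  then obtain s t where s: "a = 1 + int d * s" and t: "b = int d * t"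
    by (metis cong_iff_lin cong_sym add.commute cong_0_iff dvd_def)
  define D where "D = int d"
  have gen: "\<exists>X Y. gpow y j = (1 + int j * D * s + D * D * X, int j * D * t + D * D * Y)" for j
  proof (induction j)
    case 0 thus ?case by (rule exI[of _ 0], rule exI[of _ 0]) simp
  next
    case (Suc j)
    then obtain X Y where XY: "gpow y j = (1 + int j * D * s + D * D * X, int j * D * t + D * D * Y)" by blast
    show ?case
      apply (rule exI[of _ "X + int j * s^2 + D * s * X - int j * t^2 - D * t * Y"])
      apply (rule exI[of _ "Y + 2 * int j * s * t + D * s * Y + D * t * X"])
      apply (simp only: gpow.simps XY)
      by (simp add: yab s t D_def gmult_def algebra_simps power2_eq_square)
  qed
  obtain X Y where XY: "gpow y q = (1 + int q * D * s + D * D * X, int q * D * t + D * D * Y)"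
    using gen by blast
  obtain r where r: "d = q * r" using qd by blast
  have "int (q * d) dvd int q * D * s + D * D * X" "int (q * d) dvd int q * D * t + D * D * Y"
    unfolding D_def r by (simp_all add: algebra_simps)
  thus ?thesis using XY unfolding gcong_def
    by (simp add: cong_iff_dvd_diff)
qed

lemma lift_pow:
  assumes y: "gcong p y (1, 0)"
  shows "gcong (p ^ Suc j) (gpow y (p ^ j)) (1, 0)"
proof (induction j)
  case 0 thus ?case using y by simp
next
  case (Suc j)
  have "gcong (p * p ^ Suc j) (gpow (gpow y (p ^ j)) p) (1, 0)"
    by (rule lift_step[OF Suc]) simp
  moreover have "gpow (gpow y (p ^ j)) p = gpow y (p ^ Suc j)"
    by (simp only: gpow_mult[symmetric] power_Suc mult.commute)
  moreover have "p * p ^ Suc j = p ^ Suc (Suc j)" by simp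
  ultimately show ?case by metis
qed

lemma gpow_one[simp]: "gpow (1, 0) k = (1, 0)"
  using gpow_real[of 1 k] by simp

lemma gcong_pow_dvd:
  assumes "gcong n (gpow x a) (1, 0)" "a dvd b"
  shows "gcong n (gpow x b) (1, 0)"
proof -
  obtain c where "b = a * c" using assms(2) by blast
  hence "gpow x b = gpow (gpow x a) c" by (simp add: gpow_mult)
  thus ?thesis using gcong_pow[OF assms(1), of c] by simp
qed

lemma nat_dvd_local:
  fixes n m :: nat
  assumes n: "n > 0" and h: "\<And>p. prime p \<Longrightarrow> p dvd n \<Longrightarrow> p ^ multiplicity p n dvd m"
  shows "n dvd m"
proof (cases "m = 0")
  case True thus ?thesis by simp
next
  case False
  show ?thesis
  proof (rule multiplicity_le_imp_dvd)
    show "n \<noteq> 0" using n by simp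
    fix p :: nat assume p: "prime p"
    show "multiplicity p n \<le> multiplicity p m"
    proof (cases "p dvd n")
      case True
      have "p ^ multiplicity p n dvd m" using h[OF p True] .
      moreover have "\<not> is_unit p" using p by (simp add: prime_nat_iff)
      ultimately show ?thesis using power_dvd_iff_le_multiplicity[OF False] by blast
    next
      case False thus ?thesis by (simp add: not_dvd_imp_multiplicity_0)
    qed
  qed
qed

lemma int_dvd_local:
  fixes n :: nat and D :: int
  assumes n: "n > 0" and h: "\<And>p. prime p \<Longrightarrow> p dvd n \<Longrightarrow> int (p ^ multiplicity p n) dvd D"
  shows "int n dvd D"
proof -
  have "n dvd nat \<bar>D\<bar>"
  proof (rule nat_dvd_local[OF n])
    fix p :: nat assume "prime p" "p dvd n"
    thus "p ^ multiplicity p n dvd nat \<bar>D\<bar>" using h dvd_nat_abs_iff by blast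
  qed
  thus ?thesis using dvd_nat_abs_iff by blast
qed

lemma gcong_local:
  assumes n: "n > 0" and h: "\<And>p. prime p \<Longrightarrow> p dvd n \<Longrightarrow> gcong (p ^ multiplicity p n) z w"
  shows "gcong n z w"
proof -
  have "int n dvd fst z - fst w"
    by (rule int_dvd_local[OF n]) (use h in \<open>auto simp: gcong_def cong_iff_dvd_diff\<close>)
  moreover have "int n dvd snd z - snd w"
    by (rule int_dvd_local[OF n]) (use h in \<open>auto simp: gcong_def cong_iff_dvd_diff\<close>)
  ultimately show ?thesis unfolding gcong_def by (simp add: cong_iff_dvd_diff)
qed

lemma coprime_FF_prime:
  assumes "prime p" "odd p"
  shows "coprime (FF p) p"
proof -
  have p1: "p \<ge> 1" using assms prime_ge_1_nat by blast
  show ?thesis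
  proof (cases "p mod 4 = 1")
    case True
    hence "FF p = p - 1" using FF_odd_prime assms by simp
    moreover have "coprime (p - 1) p" by (rule coprime_diff_one_left_nat) (use p1 in simp)
    ultimately show ?thesis by simp
  next
    case False
    hence "FF p = p + 1" using FF_odd_prime assms by simp
    moreover have "coprime (p + 1) p" by simp
    ultimately show ?thesis by simp
  qed
qed

lemma mult_pos: "prime (p::nat) \<Longrightarrow> p dvd n \<Longrightarrow> n > 0 \<Longrightarrow> multiplicity p n \<ge> 1"
proof -
  assume a: "prime p" "p dvd n" "n > 0"
  hence "\<not> is_unit p" by (simp add: prime_nat_iff)
  thus ?thesis using power_dvd_iff_le_multiplicity[of n p 1] a by simp
qed

lemma local_exp_odd:
  assumes p: "prime p" "odd p" "p dvd n" and n: "n > 0"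
    and N: "[gnorm x = 1] (mod int n)" and K1: "FF p dvd K" and K2: "p ^ (multiplicity p n - 1) dvd K"
  shows "gcong (p ^ multiplicity p n) (gpow x K) (1, 0)"
proof -
  define e where "e = multiplicity p n"
  have e1: "e \<ge> 1" using mult_pos p n e_def by blast
  have Np: "[gnorm x = 1] (mod int p)" using N p(3) cong_dvd_modulus int_dvd_int_iff by blast
  have y: "gcong p (gpow x (FF p)) (1, 0)" using Gp_exp[OF p(1,2) Np] .
  have "gcong (p ^ Suc (e - 1)) (gpow (gpow x (FF p)) (p ^ (e - 1))) (1, 0)" by (rule lift_pow[OF y])
  hence "gcong (p ^ e) (gpow x (FF p * p ^ (e - 1))) (1, 0)" using e1 by (simp add: gpow_mult)
  moreover have "FF p * p ^ (e - 1) dvd K"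
    using K1 K2 coprime_FF_prime[OF p(1,2)] e_def
    by (simp add: divides_mult coprime_power_right_iff)
  ultimately show ?thesis using gcong_pow_dvd e_def by blast
qed

lemma local_exp_two:
  assumes "2 dvd n" and n: "n > 0"
    and N: "[gnorm x = 1] (mod int n)" and K: "2 ^ multiplicity 2 n dvd K"
  shows "gcong (2 ^ multiplicity 2 n) (gpow x K) (1, 0)"
proof -
  define e where "e = multiplicity (2::nat) n"
  have e1: "e \<ge> 1" using mult_pos assms e_def by (metis prime_nat_iff_prime two_is_prime_nat)
  have N2: "[gnorm x = 1] (mod 2)" using N assms(1) cong_dvd_modulus
    by (metis int_dvd_int_iff of_nat_numeral)
  obtain a b where x: "x = (a, b)" by fastforce
  have "(a^2 + b^2) mod 2 = 1" using N2 x by (simp add: gnorm_def cong_def)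
  hence "odd (a^2 + b^2)" by presburger
  hence o: "odd (a^2 - b^2)"
    by (metis add_diff_cancel_right' diff_diff_eq2 even_add even_diff mult_2 even_mult_iff)
  have g2: "gpow x 2 = (a^2 - b^2, 2*a*b)" by (simp add: x gmult_def power2_eq_square numeral_2_eq_2)
  have "(a^2 - b^2) mod 2 = 1" using o by (rule odd_iff_mod_2_eq_one[THEN iffD1])
  hence "[a^2 - b^2 = 1] (mod 2)" by (simp add: cong_def)
  moreover have "[2*a*b = 0] (mod 2)" by (simp add: cong_def)
  ultimately have y: "gcong 2 (gpow x 2) (1, 0)" unfolding gcong_def g2 by simp
  have "gcong (2 ^ Suc (e - 1)) (gpow (gpow x 2) (2 ^ (e - 1))) (1, 0)" by (rule lift_pow[OF y])
  moreover have "Suc (e - 1) = e" using e1 by simp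
  moreover have "gpow (gpow x 2) (2 ^ (e - 1)) = gpow x (2 ^ e)"
  proof -
    have "(2::nat) * 2 ^ (e - 1) = 2 ^ e" using e1 by (cases e) auto
    thus ?thesis by (simp only: gpow_mult[symmetric])
  qed
  ultimately have "gcong (2 ^ e) (gpow x (2 ^ e)) (1, 0)" by simp
  thus ?thesis using gcong_pow_dvd K e_def by blast
qed



definition PE :: "nat \<Rightarrow> nat \<Rightarrow> bool" where
  "PE n k \<longleftrightarrow> (\<forall>x\<in>Gn n. gcong n (gpow x k) (1, 0))"

lemma Gn_norm: "x \<in> Gn n \<Longrightarrow> [gnorm x = 1] (mod int n)"
  by (simp add: Gn_def)

lemma prime_even_two: "prime (p::nat) \<Longrightarrow> \<not> odd p \<Longrightarrow> p = 2"
  using primes_dvd_imp_eq two_is_prime_nat by blast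

lemma FF_pos: "(p::nat) > 1 \<Longrightarrow> FF p > 0"
  unfolding FF_def by simp

lemma exp_exists:
  assumes n: "n > 0"
  shows "PE n (\<Prod>p\<in>prime_factors n. FF p * p ^ multiplicity p n)"
  unfolding PE_def
proof
  fix x assume x: "x \<in> Gn n"
  define K where "K = (\<Prod>p\<in>prime_factors n. FF p * p ^ multiplicity p n)"
  have N: "[gnorm x = 1] (mod int n)" using Gn_norm[OF x] .
  show "gcong n (gpow x (\<Prod>p\<in>prime_factors n. FF p * p ^ multiplicity p n)) (1, 0)"
    unfolding K_def[symmetric]
  proof (rule gcong_local[OF n])
    fix p assume p: "prime p" "p dvd n"
    have pf: "p \<in> prime_factors n" using p n by (simp add: in_prime_factors_iff)
    have d: "FF p * p ^ multiplicity p n dvd K" unfolding K_def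
      by (rule dvd_prodI[OF _ pf]) simp
    show "gcong (p ^ multiplicity p n) (gpow x K) (1, 0)"
    proof (cases "odd p")
      case True
      have "FF p dvd K" using d by (rule dvd_mult_left)
      moreover have "p ^ (multiplicity p n - 1) dvd K"
      proof -
        have "p ^ (multiplicity p n - 1) dvd p ^ multiplicity p n" by (rule le_imp_power_dvd) simp
        moreover have "p ^ multiplicity p n dvd K" using d by (rule dvd_mult_right)
        ultimately show ?thesis by (rule dvd_trans)
      qed
      ultimately show ?thesis using local_exp_odd[OF p(1) True p(2) n N] by blast
    next
      case False
      hence p2: "p = 2" using prime_even_two p by blast
      have "p ^ multiplicity p n dvd K" using d by (rule dvd_mult_right)
      thus ?thesis using local_exp_two[OF _ n N] p p2 by blast
    qed
  qed
qed

lemma exp_exists_pos: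
  assumes n: "n > 0"
  shows "(\<Prod>p\<in>prime_factors n. FF p * p ^ multiplicity p n) > 0"
proof (rule prod_pos)
  fix p assume "p \<in> prime_factors n"
  hence "prime p" by (simp add: in_prime_factors_iff)
  hence "p > 1" using prime_gt_1_nat by blast
  thus "0 < FF p * p ^ multiplicity p n" using FF_pos by simp
qed

lemma Lambda_props:
  assumes n: "n > 0"
  shows "Lambda n > 0 \<and> PE n (Lambda n)"
proof -
  have "\<exists>k. 0 < k \<and> PE n k" using exp_exists[OF n] exp_exists_pos[OF n] by blast
  hence "0 < Lambda n \<and> PE n (Lambda n)" unfolding Lambda_def PE_def[symmetric]
    by (rule LeastI_ex)
  thus ?thesis .
qed

lemma PE_dvd: "PE n L \<Longrightarrow> L dvd K \<Longrightarrow> PE n K"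
  unfolding PE_def using gcong_pow_dvd by blast

lemma PE_mod:
  assumes "PE n K" "PE n L"
  shows "PE n (K mod L)"
  unfolding PE_def
proof
  fix x assume x: "x \<in> Gn n"
  have K: "gcong n (gpow x K) (1, 0)" and L: "gcong n (gpow x L) (1, 0)"
    using assms x unfolding PE_def by blast+
  have "gpow x K = gmult (gpow (gpow x L) (K div L)) (gpow x (K mod L))"
  proof -
    have "gpow x K = gpow x (L * (K div L) + K mod L)" by simp
    thus ?thesis by (simp only: gpow_add gpow_mult)
  qed
  moreover have "gcong n (gmult (gpow (gpow x L) (K div L)) (gpow x (K mod L))) (gmult (1, 0) (gpow x (K mod L)))"
    using gcong_mult[OF gcong_pow[OF L] gcong_refl] by simp
  ultimately have "gcong n (gpow x K) (gpow x (K mod L))" by simp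
  thus "gcong n (gpow x (K mod L)) (1, 0)" using K gcong_sym gcong_trans by blast
qed

lemma Lambda_dvd:
  assumes n: "n > 0" and K: "PE n K"
  shows "Lambda n dvd K"
proof (rule ccontr)
  assume nd: "\<not> Lambda n dvd K"
  have L: "Lambda n > 0" "PE n (Lambda n)" using Lambda_props[OF n] by auto
  have r: "K mod Lambda n > 0" using nd by (simp add: dvd_eq_mod_eq_0)
  have "PE n (K mod Lambda n)" using PE_mod[OF K L(2)] .
  hence "(LEAST k. 0 < k \<and> PE n k) \<le> K mod Lambda n"
    using r by (intro Least_le) simp
  hence "Lambda n \<le> K mod Lambda n" by (simp add: Lambda_def PE_def)
  moreover have "K mod Lambda n < Lambda n" using L(1) by simp
  ultimately show False by simp
qed



lemma squarefree_mult_one: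
  assumes "squarefree (n::nat)" "prime p" "p dvd n"
  shows "multiplicity p n = 1"
proof -
  have n0: "n \<noteq> 0" using assms(1) by (metis not_squarefree_0)
  have "multiplicity p n \<le> 1" using assms(1,2) squarefree_factorial_semiring''[OF n0] by blast
  moreover have "multiplicity p n \<ge> 1" using mult_pos[OF assms(2,3)] n0 by simp
  ultimately show ?thesis by simp
qed

lemma iii_imp_PE:
  assumes n: "n > 1"
    and H1: "\<forall>p. prime p \<and> p dvd n \<longrightarrow> FF p dvd FF n"
    and H2: "(odd n \<and> squarefree n) \<or> 4 dvd n"
  shows "PE n (FF n)"
  unfolding PE_def
proof
  fix x assume x: "x \<in> Gn n"
  have N: "[gnorm x = 1] (mod int n)" using Gn_norm[OF x] .
  have n0: "n > 0" using n by simp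
  show "gcong n (gpow x (FF n)) (1, 0)"
  proof (rule gcong_local[OF n0])
    fix p assume p: "prime p" "p dvd n"
    have Fd: "FF p dvd FF n" using H1 p by blast
    show "gcong (p ^ multiplicity p n) (gpow x (FF n)) (1, 0)"
    proof (cases "odd n \<and> squarefree n")
      case True
      have po: "odd p" using True p(2) by (meson dvd_trans)
      have Np: "[gnorm x = 1] (mod int p)" using N p(2) cong_dvd_modulus int_dvd_int_iff by blast
      have "gcong p (gpow x (FF p)) (1, 0)" using Gp_exp[OF p(1) po Np] .
      hence "gcong p (gpow x (FF n)) (1, 0)" using Fd gcong_pow_dvd by blast
      moreover have "multiplicity p n = 1" using squarefree_mult_one True p by blast
      ultimately show ?thesis by simp
    next
      case False
      hence n4: "4 dvd n" using H2 by blast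
      hence FFn: "FF n = n" unfolding FF_def by presburger
      show ?thesis
      proof (cases "odd p")
        case True
        have "p ^ (multiplicity p n - 1) dvd n"
        proof -
          have "p ^ (multiplicity p n - 1) dvd p ^ multiplicity p n" by (rule le_imp_power_dvd) simp
          moreover have "p ^ multiplicity p n dvd n" by (rule multiplicity_dvd)
          ultimately show ?thesis by (rule dvd_trans)
        qed
        thus ?thesis using local_exp_odd[OF p(1) True p(2) n0 N] Fd FFn by simp
      next
        case False
        hence p2: "p = 2" using prime_even_two p by blast
        have "2 ^ multiplicity 2 n dvd n" by (rule multiplicity_dvd)
        thus ?thesis using local_exp_two[OF _ n0 N] p p2 FFn by simp
      qed
    qed
  qed
qed

lemma ginv_ex:
  assumes c: "coprime (int n) (gnorm z)"
  shows "gcong n (gmult (ginv n (gconj z)) (gconj z)) (1, 0)"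
proof -
  have "coprime (gnorm z) (int n)" using c by (simp add: coprime_commute)
  then obtain M where M: "[gnorm z * M = 1] (mod int n)" using cong_solve_coprime_int by blast
  define v where "v = (M * fst z, M * snd z)"
  have "gmult v (gconj z) = (gnorm z * M, 0)"
    by (simp add: v_def gmult_def gconj_def gnorm_def power2_eq_square algebra_simps)
  hence "gcong n (gmult v (gconj z)) (1, 0)" using M by (simp add: gcong_def)
  hence "\<exists>v. gcong n (gmult v (gconj z)) (1, 0)" by blast
  thus ?thesis unfolding ginv_def by (rule someI_ex)
qed

lemma gnorm_one[simp]: "gnorm (1, 0) = 1" by (simp add: gnorm_def)

lemma ii_imp_carm:
  assumes comp: "composite n" and d: "Lambda n dvd FF n"
  shows "gauss_carmichael n"
  unfolding gauss_carmichael_def gauss_fermat_psp_def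
proof (intro conjI allI impI comp)
  fix z assume c: "coprime (int n) (gnorm z)"
  have n0: "n > 0" using comp by (simp add: composite_def)
  define v where "v = ginv n (gconj z)"
  define w where "w = gmult z v"
  have vz: "gcong n (gmult v (gconj z)) (1, 0)" using ginv_ex[OF c] v_def by simp
  have "[gnorm (gmult v (gconj z)) = gnorm (1, 0)] (mod int n)" using gcong_norm[OF vz] .
  hence Nw: "[gnorm w = 1] (mod int n)" by (simp add: w_def gnorm_mult mult.commute)
  define w' where "w' = (fst w mod int n, snd w mod int n)"
  have ww': "gcong n w w'" by (simp add: w'_def gcong_def cong_def)
  have "[gnorm w' = gnorm w] (mod int n)" using gcong_norm[OF gcong_sym[OF ww']] .
  hence "[gnorm w' = 1] (mod int n)" using Nw cong_trans by blast
  hence w'G: "w' \<in> Gn n" unfolding Gn_def w'_def using n0 by simp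
  have "PE n (Lambda n)" using Lambda_props[OF n0] by blast
  hence "PE n (FF n)" using PE_dvd d by blast
  hence "gcong n (gpow w' (FF n)) (1, 0)" using w'G unfolding PE_def by blast
  moreover have "gcong n (gpow w (FF n)) (gpow w' (FF n))" using gcong_pow[OF ww'] .
  ultimately show "gcong n (gpow (gmult z (ginv n (gconj z))) (FF n)) (1, 0)"
    unfolding w_def v_def using gcong_trans by blast
qed (use assms in auto)



lemma carm_cong:
  assumes "gauss_carmichael n" "coprime (int n) (gnorm z)"
  shows "gcong n (gpow z (FF n)) (gpow (gconj z) (FF n))"
proof -
  define v where "v = ginv n (gconj z)"
  have vz: "gcong n (gmult v (gconj z)) (1, 0)" using ginv_ex[OF assms(2)] v_def by simp
  have h: "gcong n (gpow (gmult z v) (FF n)) (1, 0)"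
    using assms unfolding gauss_carmichael_def gauss_fermat_psp_def v_def by blast
  have "gcong n (gmult (gpow (gmult z v) (FF n)) (gpow (gconj z) (FF n))) (gmult (1, 0) (gpow (gconj z) (FF n)))"
    using gcong_mult[OF h gcong_refl] .
  moreover have "gmult (gpow (gmult z v) (FF n)) (gpow (gconj z) (FF n)) = gmult (gpow z (FF n)) (gpow (gmult v (gconj z)) (FF n))"
    by (simp add: gpow_gmult gmult_assoc)
  moreover have "gcong n (gmult (gpow z (FF n)) (gpow (gmult v (gconj z)) (FF n))) (gmult (gpow z (FF n)) (1, 0))"
    using gcong_mult[OF gcong_refl gcong_pow[OF vz]] by simp
  ultimately show ?thesis using gcong_sym gcong_trans by (metis gmult_one(1) gmult_one(2))
qed

lemma crt_choose:
  assumes p: "prime p" "p dvd n" and n: "n > 0" and z0: "\<not> int p dvd gnorm z0"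
  shows "\<exists>z. gcong p z z0 \<and> coprime (int n) (gnorm z)"
proof -
  have nu: "\<not> is_unit p" using p by (simp add: prime_nat_iff)
  obtain r where r: "n = p ^ multiplicity p n * r" "\<not> p dvd r"
    using multiplicity_decompose'[of n p] n nu by auto
  have cpr: "coprime (int p) (int r)" using r(2) p(1)
    by (simp add: prime_imp_coprime)
  obtain a where a: "[a = fst z0] (mod int p)" "[a = 1] (mod int r)"
    using binary_chinese_remainder_int[OF cpr] by blast
  obtain b where b: "[b = snd z0] (mod int p)" "[b = 0] (mod int r)"
    using binary_chinese_remainder_int[OF cpr] by blast
  define z where "z = (a, b)"
  have zz0: "gcong p z z0" using a b by (simp add: z_def gcong_def)
  have "[gnorm z = gnorm z0] (mod int p)" using gcong_norm[OF zz0] .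
  hence "\<not> int p dvd gnorm z" using z0 cong_dvd_iff by blast
  hence c1: "coprime (int p) (gnorm z)" using p(1)
    by (simp add: prime_imp_coprime)
  have "[a ^ 2 + b ^ 2 = 1 ^ 2 + 0 ^ 2] (mod int r)"
    by (rule cong_add; rule cong_pow) (use a(2) b(2) in auto)
  hence "[1 = gnorm z] (mod int r)" unfolding z_def gnorm_def by (simp add: cong_sym)
  hence "coprime (gnorm z) (int r)" by (rule cong_imp_coprime) simp
  hence c2: "coprime (int r) (gnorm z)" by (simp add: coprime_commute)
  have "coprime (int p ^ multiplicity p n * int r) (gnorm z)"
    using c1 c2 by simp
  hence "coprime (int n) (gnorm z)" by (subst r(1)) simp
  thus ?thesis using zz0 by blast
qed

lemma neg1_QR:
  assumes p: "prime p" "p mod 4 = 1"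
  shows "\<exists>c. [c ^ 2 = - 1] (mod int p)"
proof (rule ccontr)
  assume nq: "\<not> ?thesis"
  have "p \<ge> 2" using p(1) prime_ge_2_nat by blast
  moreover have "p \<noteq> 2" using p(2) by auto
  ultimately have p2: "2 < p" by simp
  have e: "[Legendre (- 1) (int p) = (- 1) ^ ((p - 1) div 2)] (mod int p)"
    using euler_criterion[OF p(1) p2] by simp
  have "even ((p - 1) div 2)" using p(2) by presburger
  hence "(- 1 :: int) ^ ((p - 1) div 2) = 1" by simp
  moreover have "\<not> [- 1 = 0] (mod int p)"
  proof
    assume "[- 1 = 0] (mod int p)"
    hence "int p dvd 1" by (simp add: cong_0_iff)
    thus False using p2 by simp
  qed
  moreover have "\<not> QuadRes (int p) (- 1)" using nq unfolding QuadRes_def by blast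
  ultimately have "[- 1 = 1] (mod int p)" using e unfolding Legendre_def by simp
  hence "int p dvd 2" by (simp add: cong_iff_dvd_diff)
  thus False using zdvd_imp_le[of "int p" 2] p2 by simp
qed

lemma neg1_nQR:
  assumes p: "prime p" "p mod 4 = 3"
  shows "\<not> [c ^ 2 = - 1] (mod int p)"
proof
  assume cc: "[c ^ 2 = - 1] (mod int p)"
  have "p \<ge> 2" using p(1) prime_ge_2_nat by blast
  moreover have "p \<noteq> 2" using p(2) by auto
  ultimately have p2: "2 < p" by simp
  have e: "[Legendre (- 1) (int p) = (- 1) ^ ((p - 1) div 2)] (mod int p)"
    using euler_criterion[OF p(1) p2] by simp
  have "odd ((p - 1) div 2)" using p(2) by presburger
  hence "(- 1 :: int) ^ ((p - 1) div 2) = - 1" by simp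
  moreover have "\<not> [- 1 = 0] (mod int p)"
  proof
    assume "[- 1 = 0] (mod int p)"
    hence "int p dvd 1" by (simp add: cong_0_iff)
    thus False using p2 by simp
  qed
  moreover have "QuadRes (int p) (- 1)" using cc unfolding QuadRes_def by blast
  ultimately have "[1 = - 1] (mod int p)" using e unfolding Legendre_def by simp
  hence "int p dvd 2" by (simp add: cong_iff_dvd_diff)
  thus False using zdvd_imp_le[of "int p" 2] p2 by simp
qed



definition phi :: "int \<Rightarrow> gint \<Rightarrow> int" where "phi c x = fst x + snd x * c"

lemma phi_mult:
  assumes c: "[c ^ 2 = - 1] (mod m)"
  shows "[phi c (gmult x y) = phi c x * phi c y] (mod m)"
proof -
  have eq: "phi c x * phi c y = phi c (gmult x y) + snd x * snd y * (c ^ 2 + 1)"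
    by (simp add: phi_def gmult_def power2_eq_square algebra_simps)
  have "[c ^ 2 + 1 = - 1 + 1] (mod m)" using c by (rule cong_add) simp
  hence "[c ^ 2 + 1 = 0] (mod m)" by simp
  hence "[snd x * snd y * (c ^ 2 + 1) = snd x * snd y * 0] (mod m)" by (rule cong_mult[OF cong_refl])
  hence "[phi c (gmult x y) + snd x * snd y * (c ^ 2 + 1) = phi c (gmult x y) + 0] (mod m)"
    by (intro cong_add[OF cong_refl]) simp
  thus ?thesis using eq by (simp add: cong_sym)
qed

lemma phi_pow:
  assumes c: "[c ^ 2 = - 1] (mod m)"
  shows "[phi c (gpow x k) = phi c x ^ k] (mod m)"
proof (induction k)
  case 0 thus ?case by (simp add: phi_def)
next
  case (Suc k)
  have "[phi c (gmult x (gpow x k)) = phi c x * phi c (gpow x k)] (mod m)" by (rule phi_mult[OF c])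
  moreover have "[phi c x * phi c (gpow x k) = phi c x * phi c x ^ k] (mod m)"
    using Suc by (simp add: cong_mult)
  ultimately show ?case by (simp add: cong_trans)
qed

lemma phi_cong: "gcong m x y \<Longrightarrow> [phi c x = phi c y] (mod int m)"
  unfolding gcong_def phi_def by (simp add: cong_add cong_mult)

lemma p1_part:
  assumes p: "prime p" "p mod 4 = 1" "p dvd n" and n: "n > 0" and carm: "gauss_carmichael n"
  shows "(p - 1) dvd FF n"
proof -
  obtain c where c: "[c ^ 2 = - 1] (mod int p)" using neg1_QR[OF p(1,2)] by blast
  have op: "odd p" using p(2) by presburger
  obtain g where "\<forall>k>0. residue_primroot (p ^ k) g"
    using residue_primroot_odd_prime_power_exists[OF p(1) op] by blast
  hence "residue_primroot p g" by (metis power_one_right zero_less_one)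
  hence g: "coprime p g" "ord p g = p - 1"
    using p(1) by (auto simp: residue_primroot_def totient_prime)
  define G where "G = int g"
  define z0 where "z0 = (1 + G, (1 - G) * c)"
  have p2: "p > 2" using p prime_ge_2_nat[OF p(1)] by (cases "p = 2") auto
  have n4: "[gnorm z0 = 4 * G] (mod int p)"
  proof -
    have "gnorm z0 = (1 + G)^2 + (1 - G)^2 * c^2" by (simp add: z0_def gnorm_def power_mult_distrib)
    moreover have "[(1 + G)^2 + (1 - G)^2 * c^2 = (1 + G)^2 + (1 - G)^2 * (-1)] (mod int p)"
      using c by (intro cong_add cong_mult) auto
    moreover have "(1 + G)^2 + (1 - G)^2 * (-1) = 4 * G" by (simp add: power2_eq_square algebra_simps)
    ultimately show ?thesis by simp
  qed
  have np4: "\<not> int p dvd 4 * G"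
  proof
    assume "int p dvd 4 * G"
    hence "int p dvd 4 \<or> int p dvd G" using p(1) prime_dvd_mult_iff
      by (metis prime_nat_iff_prime prime_int_nat_transfer nat_int of_nat_0_le_iff)
    moreover have "\<not> int p dvd 4"
    proof
      assume "int p dvd 4"
      hence "p dvd 4" by presburger
      hence "p dvd 2 * 2" by simp
      hence "p dvd 2" using p(1) prime_dvd_mult_iff by blast
      thus False using p2 by (simp add: nat_dvd_not_less)
    qed
    moreover have "\<not> int p dvd G"
    proof
      assume "int p dvd G"
      hence "p dvd g" unfolding G_def by simp
      hence "p dvd 1" using g(1) by (meson coprime_common_divisor dvd_refl)
      thus False using p(1) by simp
    qed
    ultimately show False by blast
  qed
  have nz0: "\<not> int p dvd gnorm z0" using n4 np4 cong_dvd_iff by blast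
  obtain z where z: "gcong p z z0" "coprime (int n) (gnorm z)"
    using crt_choose[OF p(1,3) n nz0] by blast
  have "gcong n (gpow z (FF n)) (gpow (gconj z) (FF n))" using carm_cong[OF carm z(2)] .
  hence "gcong p (gpow z (FF n)) (gpow (gconj z) (FF n))" using gcong_dvd p(3) by blast
  moreover have "gcong p (gpow z (FF n)) (gpow z0 (FF n))" using gcong_pow[OF z(1)] .
  moreover have "gcong p (gpow (gconj z) (FF n)) (gpow (gconj z0) (FF n))"
    using gcong_pow[OF gcong_conj[OF z(1)]] .
  ultimately have zz: "gcong p (gpow z0 (FF n)) (gpow (gconj z0) (FF n))"
    using gcong_sym gcong_trans by meson
  define F where "F = FF n"
  have "[phi c (gpow z0 F) = phi c (gpow (gconj z0) F)] (mod int p)" using phi_cong[OF zz] F_def by simp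
  moreover have "[phi c (gpow z0 F) = phi c z0 ^ F] (mod int p)" by (rule phi_pow[OF c])
  moreover have "[phi c (gpow (gconj z0) F) = phi c (gconj z0) ^ F] (mod int p)" by (rule phi_pow[OF c])
  moreover have "[phi c z0 = 2 * G] (mod int p)"
  proof -
    have e1: "phi c z0 = 1 + G + (1 - G) * c ^ 2" by (simp add: phi_def z0_def power2_eq_square algebra_simps)
    have e2: "[1 + G + (1 - G) * c ^ 2 = 1 + G + (1 - G) * (-1)] (mod int p)"
      using c by (intro cong_add cong_mult) auto
    have e3: "1 + G + (1 - G) * (-1) = 2 * G" by (simp add: algebra_simps)
    show ?thesis using e2 by (simp only: e1 e3)
  qed
  moreover have "[phi c (gconj z0) = 2] (mod int p)"
  proof -
    have e1: "phi c (gconj z0) = 1 + G - (1 - G) * c ^ 2" by (simp add: phi_def z0_def gconj_def power2_eq_square algebra_simps)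
    have e2: "[1 + G - (1 - G) * c ^ 2 = 1 + G - (1 - G) * (-1)] (mod int p)"
      using c by (intro cong_diff cong_mult) auto
    have e3: "1 + G - (1 - G) * (-1) = 2" by (simp add: algebra_simps)
    show ?thesis using e2 by (simp only: e1 e3)
  qed
  ultimately have "[(2 * G) ^ F = 2 ^ F] (mod int p)"
    by (meson cong_pow cong_sym cong_trans)
  hence "[2 ^ F * G ^ F = 2 ^ F * 1] (mod int p)" by (simp add: power_mult_distrib)
  moreover have "coprime (2 ^ F) (int p)"
  proof -
    have "coprime 2 (int p)" using op by (simp add: coprime_commute)
    thus ?thesis by simp
  qed
  ultimately have "[G ^ F = 1] (mod int p)" using cong_mult_lcancel by blast
  hence "[g ^ F = 1] (mod p)" unfolding G_def by (metis cong_int_iff of_nat_1 of_nat_power)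
  hence "ord p g dvd F" by (rule ord_divides[THEN iffD1])
  thus ?thesis using g(2) F_def by simp
qed

lemma gpow_nil:
  assumes "int n dvd m * m"
  shows "gcong n (gpow (1, m) k) (1, int k * m)"
proof (induction k)
  case 0 thus ?case by simp
next
  case (Suc k)
  have "gcong n (gmult (1, m) (gpow (1, m) k)) (gmult (1, m) (1, int k * m))"
    using gcong_mult[OF gcong_refl Suc] .
  moreover have "gcong n (gmult (1, m) (1, int k * m)) (1, int (Suc k) * m)"
  proof -
    have "gmult (1, m) (1, int k * m) = (1 - int k * (m * m), int (Suc k) * m)"
      by (simp add: gmult_def algebra_simps)
    moreover have "[1 - int k * (m * m) = 1] (mod int n)"
      using assms by (simp add: cong_iff_dvd_diff)
    ultimately show ?thesis by (simp add: gcong_def)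
  qed
  ultimately show ?case using gcong_trans by simp
qed

lemma odd_sqfree:
  assumes comp: "composite n" and on: "odd n" and carm: "gauss_carmichael n"
  shows "squarefree n"
proof (rule ccontr)
  assume ns: "\<not> squarefree n"
  have n0: "n \<noteq> 0" using comp by (simp add: composite_def)
  obtain p where p: "prime p" "p ^ 2 dvd n"
    using ns squarefree_factorial_semiring[OF n0] by blast
  define m where "m = n div p"
  have "p dvd p ^ 2" by (simp add: power2_eq_square)
  hence pn: "p dvd n" using p(2) by (rule dvd_trans)
  have nm: "n = p * m" using pn unfolding m_def by simp
  have pm: "p dvd m"
  proof -
    obtain t where "n = p ^ 2 * t" using p(2) by blast
    hence "m = p * t" using prime_gt_0_nat[OF p(1)] by (simp add: m_def power2_eq_square)
    thus ?thesis by simp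
  qed
  have nmm: "int n dvd int m * int m"
  proof -
    obtain t where "m = p * t" using pm by blast
    hence "m * m = n * t" using nm by simp
    thus ?thesis by (metis dvd_triv_left of_nat_dvd_iff of_nat_mult)
  qed
  define z where "z = (1 :: int, int m)"
  have "[gnorm z = 1] (mod int n)"
  proof -
    have "gnorm z = 1 + int m * int m" by (simp add: z_def gnorm_def power2_eq_square)
    thus ?thesis using nmm by (simp add: cong_iff_dvd_diff)
  qed
  hence "coprime (gnorm z) (int n)" by (metis cong_imp_coprime cong_sym coprime_1_left)
  hence cz: "coprime (int n) (gnorm z)" by (simp add: coprime_commute)
  define F where "F = FF n"
  have "gcong n (gpow z F) (gpow (gconj z) F)" using carm_cong[OF carm cz] F_def by simp
  moreover have "gcong n (gpow z F) (1, int F * int m)" unfolding z_def by (rule gpow_nil[OF nmm])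
  moreover have "gcong n (gpow (gconj z) F) (1, int F * (- int m))"
  proof -
    have "int n dvd (- int m) * (- int m)" using nmm by simp
    thus ?thesis unfolding z_def gconj_def using gpow_nil[of n "- int m" F] by simp
  qed
  ultimately have "gcong n (1, int F * int m) (1, int F * (- int m))"
    using gcong_sym gcong_trans by meson
  hence "[int F * int m = - (int F * int m)] (mod int n)" by (simp add: gcong_def)
  hence "int n dvd 2 * (int F * int m)" by (simp add: cong_iff_dvd_diff)
  hence "int (p * m) dvd int (2 * F * m)" using nm by (simp add: algebra_simps)
  hence pm2: "p * m dvd 2 * F * m" by (simp only: of_nat_dvd_iff)
  have m0: "m > 0" using nm n0 by (cases m) auto
  have p2F: "p dvd 2 * F" using pm2 using m0 by (simp add: dvd_times_right_cancel_iff)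
  have op: "odd p" using on nm by simp
  have "\<not> p dvd 2"
  proof
    assume "p dvd 2"
    hence "p \<le> 2" by (simp add: dvd_imp_le)
    moreover have "p \<ge> 2" using prime_ge_2_nat[OF p(1)] .
    ultimately show False using op by simp
  qed
  hence pF: "p dvd F" using p2F p(1) prime_dvd_mult_iff by blast
  have "F = n - 1 \<or> F = n + 1" using on unfolding F_def FF_def by presburger
  hence "p dvd 1"
  proof
    assume "F = n - 1"
    hence "p dvd n - (n - 1)" using pF pn dvd_diff_nat by simp
    thus ?thesis using n0 by simp
  next
    assume "F = n + 1"
    hence "p dvd n + 1" using pF by simp
    hence "p dvd (n + 1) - n" using pn by (rule dvd_diff_nat)
    thus ?thesis by simp
  qed
  thus False using p(1) by simp
qed



lemma norm_zero_p3:
  assumes p: "prime p" "p mod 4 = 3" and d: "int p dvd a ^ 2 + b ^ 2"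
  shows "int p dvd a \<and> int p dvd b"
proof (cases "int p dvd a")
  case True
  hence "int p dvd a ^ 2" by (simp add: power2_eq_square)
  hence "int p dvd b ^ 2" using d by (simp add: dvd_add_right_iff)
  moreover have "prime (int p)" using p(1) by simp
  ultimately have "int p dvd b" using prime_dvd_power by blast
  thus ?thesis using True by simp
next
  case False
  have pp: "prime (int p)" using p(1) by simp
  hence "coprime (int p) a" using False by (rule prime_imp_coprime)
  hence "coprime a (int p)" by (simp add: coprime_commute)
  then obtain a' where a': "[a * a' = 1] (mod int p)" using cong_solve_coprime_int by blast
  have "[a ^ 2 + b ^ 2 = 0] (mod int p)" using d by (simp add: cong_0_iff)
  hence "[(a ^ 2 + b ^ 2) * a' ^ 2 = 0 * a' ^ 2] (mod int p)" by (rule cong_mult) simp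
  hence "[(a * a') ^ 2 + (b * a') ^ 2 = 0] (mod int p)" by (simp add: power_mult_distrib algebra_simps)
  moreover have "[(a * a') ^ 2 = 1 ^ 2] (mod int p)" using a' by (rule cong_pow)
  hence "[(a * a') ^ 2 = 1] (mod int p)" by simp
  hence "[1 + (b * a') ^ 2 = (a * a') ^ 2 + (b * a') ^ 2] (mod int p)"
    by (rule cong_add[OF cong_sym cong_refl])
  ultimately have "[1 + (b * a') ^ 2 = 0] (mod int p)" using cong_trans by blast
  hence "[(b * a') ^ 2 = - 1] (mod int p)"
    by (simp add: cong_iff_dvd_diff algebra_simps)
  thus ?thesis using neg1_nQR[OF p] by blast
qed

lemma small_dvd: "0 \<le> (a::int) \<Longrightarrow> a < n \<Longrightarrow> n dvd a \<Longrightarrow> a = 0"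
proof (rule ccontr)
  assume "0 \<le> a" "a < n" "n dvd a" "a \<noteq> 0"
  hence "0 < a" by simp
  thus False using zdvd_not_zless \<open>a < n\<close> \<open>n dvd a\<close> by blast
qed

definition red :: "nat \<Rightarrow> gint \<Rightarrow> gint" where
  "red p z = (fst z mod int p, snd z mod int p)"

definition gadd :: "gint \<Rightarrow> gint \<Rightarrow> gint" where
  "gadd x y = (fst x + fst y, snd x + snd y)"

definition Fp :: "nat \<Rightarrow> gint ring" where
  "Fp p = \<lparr>carrier = {0..<int p} \<times> {0..<int p}, mult = (\<lambda>x y. red p (gmult x y)),
          one = (1, 0), zero = (0, 0), add = (\<lambda>x y. red p (gadd x y))\<rparr>"

lemma red_gcong: "gcong p (red p x) x"
  by (simp add: red_def gcong_def cong_def)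

lemma gcong_red: "gcong p x y \<Longrightarrow> red p x = red p y"
  by (simp add: red_def gcong_def cong_def prod_eq_iff)

lemma red_gcong_iff: "red p x = red p y \<longleftrightarrow> gcong p x y"
  by (simp add: red_def gcong_def cong_def prod_eq_iff)

lemma red_carrier: "p > 0 \<Longrightarrow> red p x \<in> carrier (Fp p)"
  by (simp add: red_def Fp_def)

lemma red_id: "x \<in> carrier (Fp p) \<Longrightarrow> red p x = x"
  by (auto simp add: red_def Fp_def prod_eq_iff)

lemma gcong_gadd: "gcong n x x' \<Longrightarrow> gcong n y y' \<Longrightarrow> gcong n (gadd x y) (gadd x' y')"
  unfolding gcong_def gadd_def by (auto intro: cong_add)

lemma Fp_simps: "mult (Fp p) x y = red p (gmult x y)" "one (Fp p) = (1, 0)"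
  "zero (Fp p) = (0, 0)" "add (Fp p) x y = red p (gadd x y)" "carrier (Fp p) = {0..<int p} \<times> {0..<int p}"
  by (simp_all add: Fp_def)

lemma red_mult_l: "red p (gmult (red p x) y) = red p (gmult x y)"
  by (rule gcong_red, rule gcong_mult[OF red_gcong gcong_refl])
lemma red_mult_r: "red p (gmult x (red p y)) = red p (gmult x y)"
  by (rule gcong_red, rule gcong_mult[OF gcong_refl red_gcong])
lemma red_add_l: "red p (gadd (red p x) y) = red p (gadd x y)"
  by (rule gcong_red, rule gcong_gadd[OF red_gcong gcong_refl])
lemma red_add_r: "red p (gadd x (red p y)) = red p (gadd x y)"
  by (rule gcong_red, rule gcong_gadd[OF gcong_refl red_gcong])

lemma Fp_cring:
  assumes p: "p > 1"
  shows "cring (Fp p)"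
proof (rule cringI)
  have p0: "p > 0" using p by simp
  show "abelian_group (Fp p)"
  proof (rule abelian_groupI, unfold Fp_simps)
    fix x y z
    show "red p (gadd x y) \<in> {0..<int p} \<times> {0..<int p}" using red_carrier[OF p0] by (simp add: Fp_def)
    show "red p (gadd (red p (gadd x y)) z) = red p (gadd x (red p (gadd y z)))"
      by (simp only: red_add_l red_add_r) (simp add: gadd_def add.assoc)
    show "red p (gadd x y) = red p (gadd y x)" by (simp add: gadd_def add.commute)
  next
    show "(0, 0) \<in> {0..<int p} \<times> {0..<int p}" using p by simp
  next
    fix x assume x: "x \<in> {0..<int p} \<times> {0..<int p}"
    show "red p (gadd (0, 0) x) = x" using red_id[of x p] x by (simp add: gadd_def Fp_def)
    show "\<exists>y\<in>{0..<int p} \<times> {0..<int p}. red p (gadd y x) = (0, 0)"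
    proof (intro bexI)
      show "red p (gadd (red p (- fst x, - snd x)) x) = (0, 0)"
        by (simp add: red_add_l) (simp add: red_def gadd_def)
      show "red p (- fst x, - snd x) \<in> {0..<int p} \<times> {0..<int p}" using red_carrier[OF p0] by (simp add: Fp_def)
    qed
  qed
next
  have p0: "p > 0" using p by simp
  show "comm_monoid (Fp p)"
  proof (rule comm_monoidI, unfold Fp_simps)
    fix x y z
    show "red p (gmult x y) \<in> {0..<int p} \<times> {0..<int p}" using red_carrier[OF p0] by (simp add: Fp_def)
    show "red p (gmult (red p (gmult x y)) z) = red p (gmult x (red p (gmult y z)))"
      by (simp add: red_mult_l red_mult_r gmult_assoc)
    show "red p (gmult x y) = red p (gmult y x)" by (simp add: gmult_comm)
  next
    show "(1, 0) \<in> {0..<int p} \<times> {0..<int p}" using p by simp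
  next
    fix x assume x: "x \<in> {0..<int p} \<times> {0..<int p}"
    show "red p (gmult (1, 0) x) = x" using red_id[of x p] x by (simp add: Fp_def)
  qed
next
  fix x y z
  show "mult (Fp p) (add (Fp p) x y) z = add (Fp p) (mult (Fp p) x z) (mult (Fp p) y z)"
    unfolding Fp_simps
    by (simp add: red_mult_l red_add_l red_add_r) (simp add: gmult_def gadd_def algebra_simps)
qed

lemma Fp_field:
  assumes p: "prime p" "p mod 4 = 3"
  shows "field (Fp p)"
proof -
  have p1: "p > 1" using p(1) prime_gt_1_nat by blast
  interpret R: cring "Fp p" using Fp_cring[OF p1] .
  show ?thesis
  proof (rule R.cring_fieldI2)
    show "zero (Fp p) \<noteq> one (Fp p)" by (simp add: Fp_simps)
  next
    fix x assume x: "x \<in> carrier (Fp p)" "x \<noteq> zero (Fp p)"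
    obtain a b where ab: "x = (a, b)" by fastforce
    have rng: "0 \<le> a" "a < int p" "0 \<le> b" "b < int p" using x ab by (auto simp: Fp_simps)
    have "\<not> (int p dvd a \<and> int p dvd b)"
    proof
      assume "int p dvd a \<and> int p dvd b"
      hence "a = 0" "b = 0" using rng small_dvd by blast+
      thus False using x ab by (simp add: Fp_simps)
    qed
    hence "\<not> int p dvd a ^ 2 + b ^ 2" using norm_zero_p3[OF p, of a b] by blast
    hence nd: "\<not> int p dvd gnorm x" by (simp add: ab gnorm_def)
    hence "coprime (int p) (gnorm x)" using p(1) by (simp add: prime_imp_coprime)
    hence "coprime (int p) (gnorm (gconj x))" by simp
    hence g: "gcong p (gmult (ginv p (gconj (gconj x))) (gconj (gconj x))) (1, 0)" by (rule ginv_ex)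
    have cc: "gconj (gconj x) = x" by (simp add: gconj_def)
    define y where "y = red p (ginv p x)"
    show "\<exists>y\<in>carrier (Fp p). mult (Fp p) x y = one (Fp p)"
    proof (intro bexI)
      show "y \<in> carrier (Fp p)" using red_carrier p1 y_def by simp
      have "red p (gmult x y) = red p (gmult (ginv p x) x)" unfolding y_def
        by (simp add: red_mult_r gmult_comm)
      also have "\<dots> = red p (1, 0)" using g cc by (simp add: gcong_red)
      also have "\<dots> = (1, 0)" using p1 by (simp add: red_def)
      finally show "mult (Fp p) x y = one (Fp p)" by (simp add: Fp_simps)
    qed
  qed
qed



lemma pow_Fp:
  assumes p: "p > 1" and x: "x \<in> carrier (Fp p)"
  shows "x [^]\<^bsub>Fp p\<^esub> (k::nat) = red p (gpow x k)"
proof (induction k)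
  case 0 thus ?case using p by (simp add: Fp_simps red_def)
next
  case (Suc k)
  have "x [^]\<^bsub>Fp p\<^esub> Suc k = red p (gmult (red p (gpow x k)) x)"
    using Suc by (simp add: Fp_simps)
  also have "\<dots> = red p (gpow x (Suc k))" by (simp add: red_mult_l red_mult_r gmult_comm)
  finally show ?case .
qed

lemma card_Fp: "card (carrier (Fp p)) = p * p"
  by (simp add: Fp_simps card_cartesian_product)

lemma p3_gen:
  assumes p: "prime p" "p mod 4 = 3"
  shows "\<exists>a. \<not> int p dvd gnorm a \<and> (\<forall>k. gcong p (gpow a k) (1, 0) \<longrightarrow> (p * p - 1) dvd k)"
proof -
  interpret R: field "Fp p" by (rule Fp_field[OF p])
  have p1: "p > 1" using p(1) prime_gt_1_nat by blast
  have fin: "finite (carrier (Fp p))" by (simp add: Fp_simps)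
  obtain a where a: "a \<in> carrier (mult_of (Fp p))"
      "carrier (mult_of (Fp p)) = {a [^]\<^bsub>Fp p\<^esub> i | i::nat. i \<in> UNIV}"
    using R.finite_field_mult_group_has_gen[OF fin] by blast
  interpret G: group "mult_of (Fp p)" by (rule R.field_mult_group)
  have finG: "finite (carrier (mult_of (Fp p)))" using fin by simp
  have cardG: "card (carrier (mult_of (Fp p))) = p * p - 1"
  proof -
    have "(0, 0) \<in> carrier (Fp p)" using p1 by (simp add: Fp_simps)
    hence "card (carrier (Fp p) - {(0, 0)}) = p * p - 1" using fin card_Fp by simp
    thus ?thesis by (simp add: Fp_simps)
  qed
  have oe: "{a [^]\<^bsub>mult_of (Fp p)\<^esub> x | x. x \<in> (UNIV :: nat set)}
      = {a [^]\<^bsub>mult_of (Fp p)\<^esub> x | x. x \<in> {0 .. G.ord a - 1}}"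
    by (rule G.ord_elems[OF finG a(1)])
  have "carrier (mult_of (Fp p)) = (\<lambda>x. a [^]\<^bsub>Fp p\<^esub> x) ` {0 .. G.ord a - 1}"
    using a(2) oe by (auto simp: nat_pow_mult_of)
  hence "card (carrier (mult_of (Fp p))) \<le> card {0 .. G.ord a - 1}"
    by (metis card_image_le finite_atLeastAtMost)
  hence le1: "p * p - 1 \<le> Suc (G.ord a - 1)" using cardG by simp
  have "p * p \<ge> 2 * 2" using p1 by (intro mult_mono) auto
  hence ord_ge: "G.ord a \<ge> p * p - 1" using le1 by (cases "G.ord a") auto
  have "G.ord a dvd order (mult_of (Fp p))" by (rule G.ord_dvd_group_order[OF a(1)])
  hence "G.ord a dvd p * p - 1" using cardG by (simp add: order_def)
  moreover have "p * p - 1 > 0" using \<open>p * p \<ge> 2 * 2\<close> by simp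
  ultimately have "G.ord a \<le> p * p - 1" by (simp add: dvd_imp_le)
  hence ordeq: "G.ord a = p * p - 1" using ord_ge by simp
  have aR: "a \<in> carrier (Fp p)" "a \<noteq> (0, 0)" using a(1) by (auto simp: Fp_simps)
  have ndiv: "\<not> int p dvd gnorm a"
  proof
    assume d: "int p dvd gnorm a"
    obtain u v where uv: "a = (u, v)" by fastforce
    have "int p dvd u \<and> int p dvd v" using norm_zero_p3[OF p, of u v] d uv by (simp add: gnorm_def)
    moreover have "0 \<le> u" "u < int p" "0 \<le> v" "v < int p" using aR(1) uv by (auto simp: Fp_simps)
    ultimately have "u = 0" "v = 0" using small_dvd by blast+
    thus False using aR(2) uv by simp
  qed
  have "\<forall>k. gcong p (gpow a k) (1, 0) \<longrightarrow> (p * p - 1) dvd k"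
  proof (intro allI impI)
    fix k assume "gcong p (gpow a k) (1, 0)"
    hence "red p (gpow a k) = red p (1, 0)" by (rule gcong_red)
    hence "a [^]\<^bsub>Fp p\<^esub> k = \<one>\<^bsub>Fp p\<^esub>" using pow_Fp[OF p1 aR(1)] p1
      by (simp add: Fp_simps red_def)
    hence "a [^]\<^bsub>mult_of (Fp p)\<^esub> k = \<one>\<^bsub>mult_of (Fp p)\<^esub>" by (simp add: nat_pow_mult_of)
    hence "G.ord a dvd k" using G.pow_eq_id[OF a(1)] by blast
    thus "(p * p - 1) dvd k" using ordeq by simp
  qed
  thus ?thesis using ndiv by blast
qed

lemma gmult_left_comm: "gmult x (gmult y z) = gmult y (gmult x z)"
  by (metis gmult_assoc gmult_comm)

lemma gconj_conj[simp]: "gconj (gconj z) = z" by (simp add: gconj_def)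

lemma p3_part:
  assumes p: "prime p" "p mod 4 = 3" "p dvd n" and n: "n > 0" and carm: "gauss_carmichael n"
  shows "(p + 1) dvd FF n"
proof -
  obtain a where a: "\<not> int p dvd gnorm a" "\<And>k. gcong p (gpow a k) (1, 0) \<Longrightarrow> (p * p - 1) dvd k"
    using p3_gen[OF p(1,2)] by blast
  obtain z where z: "gcong p z a" "coprime (int n) (gnorm z)"
    using crt_choose[OF p(1,3) n a(1)] by blast
  define F where "F = FF n"
  have "gcong n (gpow z F) (gpow (gconj z) F)" using carm_cong[OF carm z(2)] F_def by simp
  hence "gcong p (gpow z F) (gpow (gconj z) F)" using gcong_dvd p(3) by blast
  moreover have "gcong p (gpow z F) (gpow a F)" using gcong_pow[OF z(1)] .
  moreover have "gcong p (gpow (gconj z) F) (gpow (gconj a) F)"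
    using gcong_pow[OF gcong_conj[OF z(1)]] .
  ultimately have zz: "gcong p (gpow a F) (gpow (gconj a) F)"
    using gcong_sym gcong_trans by meson
  have op: "odd p" using p(2) by presburger
  obtain u v where uv: "a = (u, v)" by fastforce
  have "gcong p (gpow a p) (gconj a)" using frob[OF p(1) op, of u v] p(2) uv by (simp add: gconj_def)
  hence "gcong p (gpow (gpow a p) F) (gpow (gconj a) F)" by (rule gcong_pow)
  hence aa: "gcong p (gpow a F) (gpow a (p * F))" using zz gcong_sym gcong_trans gpow_mult by metis
  have p1: "p \<ge> 1" using p(1) prime_ge_1_nat by blast
  have split: "gpow a (p * F) = gmult (gpow a ((p - 1) * F)) (gpow a F)"
  proof -
    have "p * F = (p - 1) * F + F" using p1 by (simp add: algebra_simps)
    thus ?thesis by (simp add: gpow_add)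
  qed
  have cop: "coprime (int p) (gnorm (gconj a))" using a(1) p(1) by (simp add: prime_imp_coprime)
  define b where "b = ginv p a"
  have ba: "gcong p (gmult b a) (1, 0)" using ginv_ex[OF cop] b_def by simp
  have "gcong p (gmult (gmult (gpow a ((p - 1) * F)) (gpow a F)) (gpow b F)) (gmult (gpow a F) (gpow b F))"
    using gcong_mult[OF gcong_sym[OF aa] gcong_refl] split by simp
  moreover have "gmult (gmult (gpow a ((p - 1) * F)) (gpow a F)) (gpow b F) = gmult (gpow a ((p - 1) * F)) (gpow (gmult b a) F)"
    by (simp add: gmult_assoc gpow_gmult gmult_comm gmult_left_comm)
  moreover have "gmult (gpow a F) (gpow b F) = gpow (gmult b a) F"
    by (simp add: gpow_gmult gmult_comm)
  moreover have "gcong p (gpow (gmult b a) F) (1, 0)" using gcong_pow[OF ba] by simp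
  ultimately have "gcong p (gmult (gpow a ((p - 1) * F)) (gpow (gmult b a) F)) (1, 0)"
    using gcong_trans by metis
  moreover have "gcong p (gmult (gpow a ((p - 1) * F)) (gpow (gmult b a) F)) (gmult (gpow a ((p - 1) * F)) (1, 0))"
    using gcong_mult[OF gcong_refl gcong_pow[OF ba]] by simp
  ultimately have "gcong p (gpow a ((p - 1) * F)) (1, 0)"
    using gcong_sym gcong_trans by (metis gmult_one(2))
  hence d1: "(p * p - 1) dvd (p - 1) * F" by (rule a(2))
  have e: "p * p - 1 = (p - 1) * (p + 1)"
  proof -
    obtain q where "p = Suc q" using p1 by (cases p) auto
    thus ?thesis by (simp add: algebra_simps)
  qed
  have ne: "p - 1 \<noteq> 0" using prime_gt_1_nat[OF p(1)] by simp
  have d2: "(p - 1) * (p + 1) dvd (p - 1) * F" using d1 by (simp only: e)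
  have "(p + 1) dvd F" by (rule iffD1[OF dvd_times_left_cancel_iff[OF ne] d2])

  thus ?thesis using F_def by simp
qed



lemma FF_two: "FF 2 = 2" by (simp add: FF_def)

lemma carm_FF_primes:
  assumes comp: "composite n" and carm: "gauss_carmichael n" and p: "prime p" "p dvd n"
  shows "FF p dvd FF n"
proof -
  have n0: "n > 0" using comp by (simp add: composite_def)
  show ?thesis
  proof (cases "odd p")
    case False
    hence p2: "p = 2" using prime_even_two p(1) by blast
    hence "even n" using p(2) by simp
    hence "FF n = n" unfolding FF_def by presburger
    thus ?thesis using p2 p(2) FF_two by simp
  next
    case True
    hence "p mod 4 = 1 \<or> p mod 4 = 3" by presburger
    thus ?thesis
    proof
      assume m: "p mod 4 = 1"
      hence "FF p = p - 1" using FF_odd_prime True by simp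
      thus ?thesis using p1_part[OF p(1) m p(2) n0 carm] by simp
    next
      assume m: "p mod 4 = 3"
      hence "FF p = p + 1" using FF_odd_prime True by simp
      thus ?thesis using p3_part[OF p(1) m p(2) n0 carm] by simp
    qed
  qed
qed

lemma four_dvd_FF: "odd p \<Longrightarrow> 4 dvd FF p"
proof -
  assume "odd p"
  hence "p mod 4 = 1 \<or> p mod 4 = 3" by presburger
  thus ?thesis
  proof
    assume m: "p mod 4 = 1"
    hence "4 dvd p - 1" by presburger
    thus ?thesis using m by (simp add: FF_def)
  next
    assume m: "p mod 4 = 3"
    hence "4 dvd p + 1" by presburger
    thus ?thesis using m by (simp add: FF_def)
  qed
qed

lemma carm_imp_iii:
  assumes comp: "composite n" and carm: "gauss_carmichael n"
  shows "(\<forall>p. prime p \<and> p dvd n \<longrightarrow> FF p dvd FF n) \<and>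
         ((odd n \<and> squarefree n) \<or>
          (4 dvd n \<and> (n div 4 \<in> {2, 3, 5} \<or> \<not> prime (n div 4))))"
proof -
  have H1: "\<forall>p. prime p \<and> p dvd n \<longrightarrow> FF p dvd FF n" using carm_FF_primes[OF comp carm] by blast
  have n1: "n > 1" "\<not> prime n" using comp by (auto simp: composite_def)
  show ?thesis
  proof (cases "odd n")
    case True
    thus ?thesis using H1 odd_sqfree[OF comp True carm] by blast
  next
    case False
    hence FFn: "FF n = n" unfolding FF_def by presburger
    have n4: "4 dvd n"
    proof (rule ccontr)
      assume n4: "\<not> 4 dvd n"
      define m where "m = n div 2"
      have nm: "n = 2 * m" using False m_def by simp
      have om: "odd m" using n4 nm by presburger
      have "m \<noteq> 1" using nm n1(2) by auto
      then obtain q where q: "prime q" "q dvd m" using prime_factor_nat by blast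
      have qn: "q dvd n" using q(2) nm by simp
      have oq: "odd q" using q(2) om by (meson dvd_trans)
      have "4 dvd FF q" using four_dvd_FF[OF oq] .
      moreover have "FF q dvd n" using H1 q(1) qn FFn by simp
      ultimately have "4 dvd n" by (rule dvd_trans)
      thus False using n4 by simp
    qed
    have "n div 4 \<in> {2, 3, 5} \<or> \<not> prime (n div 4)"
    proof (rule ccontr)
      assume h: "\<not> ?thesis"
      define q where "q = n div 4"
      have q: "prime q" "q \<notin> {2, 3, 5}" using h q_def by auto
      have nq: "n = 4 * q" using n4 q_def by simp
      have oq: "odd q" using q prime_even_two by blast
      have "FF q dvd 4 * q" using H1 q(1) nq FFn by simp
      moreover have "coprime (FF q) q" using coprime_FF_prime[OF q(1) oq] .
      ultimately have "FF q dvd 4" by (simp add: coprime_dvd_mult_left_iff)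
      hence "FF q \<le> 4" by (simp add: dvd_imp_le)
      moreover have "FF q \<ge> q - 1" unfolding FF_def by auto
      ultimately have "q \<le> 5" by simp
      moreover have "q \<ge> 2" using prime_ge_2_nat[OF q(1)] .
      ultimately have "q \<in> {2, 3, 4, 5}" by auto
      moreover have "\<not> prime (4::nat)"
      proof
        assume "prime (4::nat)"
        moreover have "(2::nat) dvd 4" by simp
        ultimately show False using prime_nat_iff[of 4] by force
      qed
      ultimately show False using q by auto
    qed
    thus ?thesis using H1 n4 by blast
  qed
qed

theorem mainTheorem10:
  fixes n :: nat
  assumes "composite n"
  shows "(gauss_carmichael n \<longleftrightarrow> Lambda n dvd FF n) \<and>
         (Lambda n dvd FF n \<longleftrightarrow>
            ((\<forall>p. prime p \<and> p dvd n \<longrightarrow> FF p dvd FF n) \<and>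
             ((odd n \<and> squarefree n) \<or>
              (4 dvd n \<and> (n div 4 \<in> {2, 3, 5} \<or> \<not> prime (n div 4))))))"
proof -
  have n1: "n > 1" using assms by (simp add: composite_def)
  have iii_ii: "Lambda n dvd FF n"
    if "(\<forall>p. prime p \<and> p dvd n \<longrightarrow> FF p dvd FF n) \<and>
             ((odd n \<and> squarefree n) \<or>
              (4 dvd n \<and> (n div 4 \<in> {2, 3, 5} \<or> \<not> prime (n div 4))))"
  proof -
    have "PE n (FF n)" using iii_imp_PE[OF n1] that by blast
    thus ?thesis using Lambda_dvd n1 by simp
  qed
  have ii_i: "gauss_carmichael n" if "Lambda n dvd FF n" using ii_imp_carm[OF assms that] .
  have i_iii: "(\<forall>p. prime p \<and> p dvd n \<longrightarrow> FF p dvd FF n) \<and>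
             ((odd n \<and> squarefree n) \<or>
              (4 dvd n \<and> (n div 4 \<in> {2, 3, 5} \<or> \<not> prime (n div 4))))"
    if "gauss_carmichael n" using carm_imp_iii[OF assms that] .
  show ?thesis using iii_ii ii_i i_iii by blast
qed


end
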